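(* Let $B\in\mathbb R^{n\times m}$, let $T_{\mathcal P}$ be a symmetric positive definite $n\times n$ matrix, and let $h:\mathbb R^n\to\mathbb R$ be differentiable with $h\in\mathcal S^{1,1}_{\mu_{h,T_{\mathcal P}},L_{h,T_{\mathcal P}}}$ with respect to $T_{\mathcal P}$. For $u_1,u_2\in\mathbb R^m$, $p_1,p_2\in\mathbb R^n$, let $q_i=p_i-T_{\mathcal P}^{-1}Bu_i$. Then $$\big(\nabla h(p_1)-\nabla h(p_2),-T_{\mathcal P}^{-1}B(u_1-u_2)\big)\ge\frac{\mu_{h,T_{\mathcal P}}}{2}\|q_1-q_2\|^2_{T_{\mathcal P}}-\frac{L_{h,T_{\mathcal P}}}{2}\|B(u_1-u_2)\|^2_{T_{\mathcal P}^{-1}}-\frac12\big(\nabla h(p_1)-\nabla h(p_2),p_1-p_2\big).$$ In particular, when $h(p)=(b,p)$ is affine, equality holds with all terms equal to $0$.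
   Context: For SPD $M$, $\|x\|_M=(Mx,x)^{1/2}$; $D_h(y,x)=h(y)-h(x)-(\nabla h(x),y-x)$; $h\in\mathcal S^{1,1}_{\mu_{h,M},L_{h,M}}$ w.r.t. $M$ means $\frac{\mu_{h,M}}2\|x-y\|_M^2\le D_h(y,x)\le\frac{L_{h,M}}2\|x-y\|_M^2$ for all $x,y$, with $\mu_{h,M}\ge0$ (for affine $h$ one takes $\mu_{h,T_{\mathcal P}}=L_{h,T_{\mathcal P}}=0$). *)

theory Defs
  imports "HOL-Analysis.Analysis"
begin

definition spd :: "real^'n^'n \<Rightarrow> bool" where
  "spd M \<longleftrightarrow> transpose M = M \<and> (\<forall>x. x \<noteq> 0 \<longrightarrow> (M *v x) \<bullet> x > 0)"

definition Mnorm :: "real^'n^'n \<Rightarrow> real^'n \<Rightarrow> real" where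
  "Mnorm M x = sqrt ((M *v x) \<bullet> x)"

definition bregman :: "(real^'n \<Rightarrow> real) \<Rightarrow> (real^'n \<Rightarrow> real^'n) \<Rightarrow> real^'n \<Rightarrow> real^'n \<Rightarrow> real" where
  "bregman h gh y x = h y - h x - gh x \<bullet> (y - x)"

definition S11 :: "(real^'n \<Rightarrow> real) \<Rightarrow> (real^'n \<Rightarrow> real^'n) \<Rightarrow> real \<Rightarrow> real \<Rightarrow> real^'n^'n \<Rightarrow> bool" where
  "S11 h gh mu L M \<longleftrightarrow> mu \<ge> 0 \<and>
     (\<forall>x y. mu / 2 * (Mnorm M (x - y))^2 \<le> bregman h gh y x \<and>
            bregman h gh y x \<le> L / 2 * (Mnorm M (x - y))^2)"

end

theory Submission
  imports Defs
begin

lemma three_point: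
  "bregman h gh z x = bregman h gh y x + (gh y - gh x) \<bullet> (z - y) + bregman h gh z y"
  unfolding bregman_def by (simp add: inner_diff_left inner_diff_right algebra_simps)

lemma mv_neg: "(A::real^'a^'b) *v (- x) = - (A *v x)"
  using matrix_vector_mult_diff_distrib[of A 0 x] by simp

lemma Mnorm_neg: "Mnorm M (- v) = Mnorm M v"
  unfolding Mnorm_def by (simp add: mv_neg)

lemma spd_inv:
  assumes "spd T"
  shows "T ** matrix_inv T = mat 1"
proof -
  have "\<forall>x. T *v x = 0 \<longrightarrow> x = 0"
    using assms unfolding spd_def by (metis inner_zero_left less_irrefl)
  then have "\<exists>B. B ** T = mat 1" using matrix_left_invertible_ker by blast
  then have "invertible T" using invertible_left_inverse by blast
  then have "\<exists>A'. T ** A' = mat 1 \<and> A' ** T = mat 1" unfolding invertible_def .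
  then show ?thesis unfolding matrix_inv_def by (metis (mono_tags, lifting) someI_ex)
qed

theorem lemma5p2:
  fixes B :: "real^'m^'n" and T :: "real^'n^'n"
    and h :: "real^'n \<Rightarrow> real" and gh :: "real^'n \<Rightarrow> real^'n"
    and mu L :: real
  assumes T_spd: "spd T"
    and grad: "\<And>x. (h has_derivative (\<lambda>v. gh x \<bullet> v)) (at x)"
    and hS: "S11 h gh mu L T"
  shows "(\<forall>u1 u2 :: real^'m. \<forall>p1 p2 :: real^'n.
      let q1 = p1 - matrix_inv T *v (B *v u1);
          q2 = p2 - matrix_inv T *v (B *v u2)
      in (gh p1 - gh p2) \<bullet> (- (matrix_inv T *v (B *v (u1 - u2))))
         \<ge> mu / 2 * (Mnorm T (q1 - q2))^2
           - L / 2 * (Mnorm (matrix_inv T) (B *v (u1 - u2)))^2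
           - 1/2 * ((gh p1 - gh p2) \<bullet> (p1 - p2)))
    \<and> (\<forall>b :: real^'n. (\<forall>p. h p = b \<bullet> p) \<and> mu = 0 \<and> L = 0 \<longrightarrow>
      (\<forall>u1 u2 :: real^'m. \<forall>p1 p2 :: real^'n.
        let q1 = p1 - matrix_inv T *v (B *v u1);
            q2 = p2 - matrix_inv T *v (B *v u2)
        in (gh p1 - gh p2) \<bullet> (- (matrix_inv T *v (B *v (u1 - u2)))) = 0
           \<and> mu / 2 * (Mnorm T (q1 - q2))^2 = 0
           \<and> L / 2 * (Mnorm (matrix_inv T) (B *v (u1 - u2)))^2 = 0
           \<and> 1/2 * ((gh p1 - gh p2) \<bullet> (p1 - p2)) = 0))"
proof (intro conjI allI impI)
  fix u1 u2 :: "real^'m" and p1 p2 :: "real^'n"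
  define v where "v = B *v (u1 - u2)"
  define d where "d = - (matrix_inv T *v v)"
  define w where "w = p1 - p2"
  let ?D = "bregman h gh"
  have lo: "\<And>x y. mu / 2 * (Mnorm T (x - y))^2 \<le> ?D y x"
   and up: "\<And>x y. ?D y x \<le> L / 2 * (Mnorm T (x - y))^2"
    using hS unfolding S11_def by auto
  have Tv: "T *v (matrix_inv T *v v) = v"
    using spd_inv[OF T_spd] by (simp add: matrix_vector_mul_assoc)
  have nv: "Mnorm (matrix_inv T) v = Mnorm T d"
  proof -
    have "(T *v d) \<bullet> d = (matrix_inv T *v v) \<bullet> v"
      unfolding d_def mv_neg Tv by (simp add: inner_commute)
    then show ?thesis unfolding Mnorm_def by simp
  qed
  have q: "(p1 - matrix_inv T *v (B *v u1)) - (p2 - matrix_inv T *v (B *v u2)) = w + d"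
    unfolding w_def d_def v_def matrix_vector_mult_diff_distrib by simp
  define z1 where "z1 = p1 + d"
  define z2 where "z2 = p2 - d"
  have e1: "?D z1 p2 = ?D p1 p2 + (gh p1 - gh p2) \<bullet> (z1 - p1) + ?D z1 p1" by (rule three_point)
  have e2: "?D z2 p1 = ?D p2 p1 + (gh p2 - gh p1) \<bullet> (z2 - p2) + ?D z2 p2" by (rule three_point)
  have l1: "mu / 2 * (Mnorm T (w + d))^2 \<le> ?D z1 p2"
  proof -
    have "p2 - z1 = - (w + d)" unfolding z1_def w_def by simp
    then have m: "Mnorm T (p2 - z1) = Mnorm T (w + d)" by (simp only: Mnorm_neg)
    show ?thesis using lo[of p2 z1] unfolding m .
  qed
  have l2: "mu / 2 * (Mnorm T (w + d))^2 \<le> ?D z2 p1"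
  proof -
    have "p1 - z2 = w + d" unfolding z2_def w_def by simp
    then show ?thesis using lo[of p1 z2] by simp
  qed
  have u1: "?D z1 p1 \<le> L / 2 * (Mnorm T d)^2"
    using up[of z1 p1] unfolding z1_def by (simp add: Mnorm_neg)
  have u2: "?D z2 p2 \<le> L / 2 * (Mnorm T d)^2"
    using up[of z2 p2] unfolding z2_def by simp
  have sw: "?D p1 p2 + ?D p2 p1 = (gh p1 - gh p2) \<bullet> w"
    unfolding bregman_def w_def by (simp add: inner_diff_left inner_diff_right algebra_simps)
  have i1: "(gh p1 - gh p2) \<bullet> (z1 - p1) = (gh p1 - gh p2) \<bullet> d" unfolding z1_def by simp
  have i2: "(gh p2 - gh p1) \<bullet> (z2 - p2) = (gh p1 - gh p2) \<bullet> d" unfolding z2_def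
    by (simp add: inner_diff_left inner_diff_right)
  have main: "(gh p1 - gh p2) \<bullet> d \<ge> mu / 2 * (Mnorm T (w + d))^2 - L / 2 * (Mnorm T d)^2
      - 1/2 * ((gh p1 - gh p2) \<bullet> w)"
    using e1 e2 l1 l2 u1 u2 sw i1 i2 by linarith
  show "let q1 = p1 - matrix_inv T *v (B *v u1);
          q2 = p2 - matrix_inv T *v (B *v u2)
      in (gh p1 - gh p2) \<bullet> (- (matrix_inv T *v (B *v (u1 - u2))))
         \<ge> mu / 2 * (Mnorm T (q1 - q2))^2
           - L / 2 * (Mnorm (matrix_inv T) (B *v (u1 - u2)))^2
           - 1/2 * ((gh p1 - gh p2) \<bullet> (p1 - p2))"
    unfolding Let_def q using main nv unfolding v_def d_def w_def by simp
next
  fix b :: "real^'n" and u1 u2 :: "real^'m" and p1 p2 :: "real^'n"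
  assume A: "(\<forall>p. h p = b \<bullet> p) \<and> mu = 0 \<and> L = 0"
  have hb: "h = (\<lambda>p. b \<bullet> p)" using A by auto
  have g: "gh x = b" for x
  proof -
    have d1: "(h has_derivative (\<lambda>v. b \<bullet> v)) (at x)"
      unfolding hb by (intro derivative_eq_intros) auto
    have "(\<lambda>v. gh x \<bullet> v) = (\<lambda>v. b \<bullet> v)"
      using has_derivative_unique[OF grad d1] .
    then have "gh x \<bullet> (gh x - b) = b \<bullet> (gh x - b)" by metis
    then have "(gh x - b) \<bullet> (gh x - b) = 0" by (simp add: inner_diff_left)
    then show ?thesis by simp
  qed
  show "let q1 = p1 - matrix_inv T *v (B *v u1);
            q2 = p2 - matrix_inv T *v (B *v u2)
        in (gh p1 - gh p2) \<bullet> (- (matrix_inv T *v (B *v (u1 - u2)))) = 0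
           \<and> mu / 2 * (Mnorm T (q1 - q2))^2 = 0
           \<and> L / 2 * (Mnorm (matrix_inv T) (B *v (u1 - u2)))^2 = 0
           \<and> 1/2 * ((gh p1 - gh p2) \<bullet> (p1 - p2)) = 0"
    using A by (simp add: g Let_def)
qed

end
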